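(* Let $X$ be a primitive distance-regular graph of diameter $d\geq 2$ on $n$ vertices with degree $k$, and let $\alpha>0$. Suppose that for some $1\leq j\leq d-1$ we have $b_j\geq\alpha k$ and $c_{j+1}\geq\alpha k$. Then $D_{\min}(X)\geq \frac{\alpha}{d}n$.
   Context: A connected graph $X$ of diameter $d$ is distance-regular if there are integers $a_i,b_i,c_i$ ($0\le i\le d$) such that for all vertices $v,w$ with $\mathrm{dist}(v,w)=i$, $w$ has exactly $c_i$ neighbours at distance $i-1$, $a_i$ at distance $i$, $b_i$ at distance $i+1$ from $v$; $X$ is $k$-regular with $k=b_0$. It is primitive if for every $1\le i\le d$ the distance-$i$ graph (same vertices, $u\sim v$ iff $\mathrm{dist}(u,v)=i$) is connected. A vertex $x$ distinguishes $u,v$ if $\mathrm{dist}(x,u)\neq\mathrm{dist}(x,v)$; $D(u,v)$ is the number of vertices distinguishing $u,v$, and $D_{\min}(X)=\min_{u\neq v}D(u,v)$. *)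

theory Defs
  imports Complex_Main
begin

definition simple_graph :: "'a set \<Rightarrow> ('a \<Rightarrow> 'a \<Rightarrow> bool) \<Rightarrow> bool" where
  "simple_graph V E \<longleftrightarrow> finite V \<and> V \<noteq> {} \<and>
     (\<forall>u v. E u v \<longrightarrow> u \<in> V \<and> v \<in> V) \<and>
     (\<forall>u v. E u v \<longrightarrow> E v u) \<and> (\<forall>u. \<not> E u u)"

fun walk :: "('a \<Rightarrow> 'a \<Rightarrow> bool) \<Rightarrow> 'a list \<Rightarrow> bool" where
  "walk R [] = False"
| "walk R [x] = True"
| "walk R (x # y # xs) = (R x y \<and> walk R (y # xs))"

definition walk_betw :: "'a set \<Rightarrow> ('a \<Rightarrow> 'a \<Rightarrow> bool) \<Rightarrow> 'a \<Rightarrow> 'a \<Rightarrow> nat \<Rightarrow> bool" where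
  "walk_betw V R u v n \<longleftrightarrow>
     (\<exists>xs. walk R xs \<and> set xs \<subseteq> V \<and> hd xs = u \<and> last xs = v \<and> length xs = Suc n)"

definition connected_rel :: "'a set \<Rightarrow> ('a \<Rightarrow> 'a \<Rightarrow> bool) \<Rightarrow> bool" where
  "connected_rel V R \<longleftrightarrow> (\<forall>u\<in>V. \<forall>v\<in>V. \<exists>n. walk_betw V R u v n)"

definition gdist :: "'a set \<Rightarrow> ('a \<Rightarrow> 'a \<Rightarrow> bool) \<Rightarrow> 'a \<Rightarrow> 'a \<Rightarrow> nat" where
  "gdist V E u v = (LEAST n. walk_betw V E u v n)"

definition diameter :: "'a set \<Rightarrow> ('a \<Rightarrow> 'a \<Rightarrow> bool) \<Rightarrow> nat" where
  "diameter V E = Max {gdist V E u v | u v. u \<in> V \<and> v \<in> V}"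

text \<open>Distance-regular with intersection arrays a, b, c (indices 0..d);
  for dist(v,w) = i: c i neighbours of w at distance i-1 from v, a i at distance i,
  b i at distance i+1.  The degree is k = b 0.\<close>
definition distance_regular ::
  "'a set \<Rightarrow> ('a \<Rightarrow> 'a \<Rightarrow> bool) \<Rightarrow> (nat \<Rightarrow> nat) \<Rightarrow> (nat \<Rightarrow> nat) \<Rightarrow> (nat \<Rightarrow> nat) \<Rightarrow> bool" where
  "distance_regular V E a b c \<longleftrightarrow> simple_graph V E \<and> connected_rel V E \<and>
     (\<forall>v\<in>V. \<forall>w\<in>V.
        card {x \<in> V. E w x \<and> gdist V E v x + 1 = gdist V E v w} = c (gdist V E v w) \<and>
        card {x \<in> V. E w x \<and> gdist V E v x = gdist V E v w} = a (gdist V E v w) \<and>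
        card {x \<in> V. E w x \<and> gdist V E v x = gdist V E v w + 1} = b (gdist V E v w))"

definition distance_graph :: "'a set \<Rightarrow> ('a \<Rightarrow> 'a \<Rightarrow> bool) \<Rightarrow> nat \<Rightarrow> 'a \<Rightarrow> 'a \<Rightarrow> bool" where
  "distance_graph V E i u v \<longleftrightarrow> u \<in> V \<and> v \<in> V \<and> gdist V E u v = i"

definition primitive :: "'a set \<Rightarrow> ('a \<Rightarrow> 'a \<Rightarrow> bool) \<Rightarrow> bool" where
  "primitive V E \<longleftrightarrow>
     (\<forall>i. 1 \<le> i \<and> i \<le> diameter V E \<longrightarrow> connected_rel V (distance_graph V E i))"

definition distinguishing_number :: "'a set \<Rightarrow> ('a \<Rightarrow> 'a \<Rightarrow> bool) \<Rightarrow> 'a \<Rightarrow> 'a \<Rightarrow> nat" where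
  "distinguishing_number V E u v = card {x \<in> V. gdist V E x u \<noteq> gdist V E x v}"

definition D_min :: "'a set \<Rightarrow> ('a \<Rightarrow> 'a \<Rightarrow> bool) \<Rightarrow> nat" where
  "D_min V E = Min {distinguishing_number V E u v | u v. u \<in> V \<and> v \<in> V \<and> u \<noteq> v}"

end

theory Submission
  imports Defs
begin

lemma walk_snoc: "ys \<noteq> [] \<Longrightarrow> walk R (ys @ [w]) \<longleftrightarrow> walk R ys \<and> R (last ys) w"
proof (induction ys)
  case Nil then show ?case by simp
next
  case (Cons x ys) then show ?case by (cases ys) auto
qed

lemma walk_betw_0: "walk_betw V R u v 0 \<longleftrightarrow> u \<in> V \<and> v = u"
proof
  assume "walk_betw V R u v 0"
  then obtain xs where "walk R xs" "set xs \<subseteq> V" "hd xs = u" "last xs = v" "length xs = 1"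
    unfolding walk_betw_def by auto
  then show "u \<in> V \<and> v = u" by (cases xs) auto
next
  assume "u \<in> V \<and> v = u" then show "walk_betw V R u v 0"
    unfolding walk_betw_def by (rule_tac x="[u]" in exI) auto
qed

lemma walk_betw_Suc: "walk_betw V R u w (Suc n) \<longleftrightarrow> (\<exists>v. walk_betw V R u v n \<and> R v w \<and> w \<in> V)"
proof
  assume "walk_betw V R u w (Suc n)"
  then obtain xs where xs: "walk R xs" "set xs \<subseteq> V" "hd xs = u" "last xs = w" "length xs = Suc (Suc n)"
    unfolding walk_betw_def by auto
  then have "xs \<noteq> []" by auto
  then obtain ys where ys: "xs = ys @ [w]" using xs(4)
    by (metis append_butlast_last_id)
  then have "ys \<noteq> []" using xs(5) by auto
  have "walk R ys \<and> R (last ys) w" using walk_snoc[OF \<open>ys \<noteq> []\<close>] xs(1) ys by simp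
  moreover have "walk_betw V R u (last ys) n" unfolding walk_betw_def
    using xs ys \<open>ys \<noteq> []\<close> calculation by (rule_tac x=ys in exI) auto
  ultimately show "\<exists>v. walk_betw V R u v n \<and> R v w \<and> w \<in> V" using xs ys by auto
next
  assume "\<exists>v. walk_betw V R u v n \<and> R v w \<and> w \<in> V"
  then obtain v ys where ys: "walk R ys" "set ys \<subseteq> V" "hd ys = u" "last ys = v" "length ys = Suc n"
    "R v w" "w \<in> V"
    unfolding walk_betw_def by auto
  then have "ys \<noteq> []" by auto
  then show "walk_betw V R u w (Suc n)" unfolding walk_betw_def using ys walk_snoc[OF \<open>ys \<noteq> []\<close>]
    by (rule_tac x="ys @ [w]" in exI) auto
qed

lemma walk_betw_V: "walk_betw V R u v n \<Longrightarrow> u \<in> V \<and> v \<in> V"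
  by (induction n arbitrary: v) (auto simp: walk_betw_0 walk_betw_Suc)

lemma walk_betw_trans: "walk_betw V R u v m \<Longrightarrow> walk_betw V R v w n \<Longrightarrow> walk_betw V R u w (m + n)"
proof (induction n arbitrary: w)
  case 0 then show ?case by (simp add: walk_betw_0)
next
  case (Suc n) then show ?case by (auto simp: walk_betw_Suc)
qed

lemma walk_betw_one: "R u v \<Longrightarrow> u \<in> V \<Longrightarrow> v \<in> V \<Longrightarrow> walk_betw V R u v 1"
  unfolding walk_betw_def by (rule_tac x="[u,v]" in exI) auto

lemma walk_betw_sym: assumes "\<And>x y. R x y \<Longrightarrow> R y x"
  shows "walk_betw V R u v n \<Longrightarrow> walk_betw V R v u n"
proof (induction n arbitrary: v)
  case 0 then show ?case by (simp add: walk_betw_0)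
next
  case (Suc n)
  then obtain x where x: "walk_betw V R u x n" "R x v" "v \<in> V" by (auto simp: walk_betw_Suc)
  have "walk_betw V R v x 1" using walk_betw_one[of R v x V] assms[OF x(2)] x(3) walk_betw_V[OF x(1)] by blast
  from walk_betw_trans[OF this Suc.IH[OF x(1)]] show ?case by simp
qed


locale drg =
  fixes V :: "'a set" and E :: "'a \<Rightarrow> 'a \<Rightarrow> bool" and a b c :: "nat \<Rightarrow> nat"
  assumes dr: "distance_regular V E a b c"
begin

abbreviation g where "g \<equiv> gdist V E"

lemma sg: "simple_graph V E" using dr unfolding distance_regular_def by auto
lemma finV: "finite V" using sg unfolding simple_graph_def by auto
lemma EV: "E u v \<Longrightarrow> u \<in> V \<and> v \<in> V" using sg unfolding simple_graph_def by auto
lemma Esym: "E u v \<Longrightarrow> E v u" using sg unfolding simple_graph_def by auto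
lemma Eirr: "\<not> E u u" using sg unfolding simple_graph_def by auto
lemma conn: "u \<in> V \<Longrightarrow> v \<in> V \<Longrightarrow> \<exists>n. walk_betw V E u v n"
  using dr unfolding distance_regular_def connected_rel_def by auto

lemma g_walk: "u \<in> V \<Longrightarrow> v \<in> V \<Longrightarrow> walk_betw V E u v (g u v)"
  unfolding gdist_def using conn by (metis LeastI_ex)
lemma g_le: "walk_betw V E u v n \<Longrightarrow> g u v \<le> n"
  unfolding gdist_def by (rule Least_le)

lemma g_refl: "u \<in> V \<Longrightarrow> g u u = 0"
  using g_le[of u u 0] walk_betw_0[of V E u u] by auto
lemma g_zero: "u \<in> V \<Longrightarrow> v \<in> V \<Longrightarrow> g u v = 0 \<Longrightarrow> v = u"
  using g_walk[of u v] walk_betw_0 by fastforce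
lemma g_sym: "u \<in> V \<Longrightarrow> v \<in> V \<Longrightarrow> g u v = g v u"
proof -
  assume a: "u \<in> V" "v \<in> V"
  have "g v u \<le> g u v" using g_le walk_betw_sym[OF Esym g_walk[OF a]] .
  moreover have "g u v \<le> g v u" using g_le walk_betw_sym[OF Esym g_walk[OF a(2,1)]] .
  ultimately show ?thesis by simp
qed
lemma g_tri: "u \<in> V \<Longrightarrow> v \<in> V \<Longrightarrow> w \<in> V \<Longrightarrow> g u w \<le> g u v + g v w"
proof -
  assume a: "u \<in> V" "v \<in> V" "w \<in> V"
  show ?thesis using g_le[OF walk_betw_trans[OF g_walk[OF a(1,2)] g_walk[OF a(2,3)]]] .
qed
lemma g_E: "E u v \<Longrightarrow> g u v \<le> 1"
  using g_le[OF walk_betw_one[of E u v V]] EV[of u v] by simp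
lemma g_E1: "E u v \<Longrightarrow> g u v = 1"
proof -
  assume e: "E u v"
  have "g u v \<noteq> 0" using g_zero[of u v] EV[OF e] Eirr e by auto
  then show ?thesis using g_E[OF e] by simp
qed
lemma g_adj: "u \<in> V \<Longrightarrow> E x y \<Longrightarrow> g u y \<le> g u x + 1"
proof -
  assume a: "u \<in> V" "E x y"
  have "g u y \<le> g u x + g x y" using g_tri a EV by blast
  then show ?thesis using g_E[OF a(2)] by simp
qed
lemma g_one_E: "u \<in> V \<Longrightarrow> v \<in> V \<Longrightarrow> g u v = 1 \<Longrightarrow> E u v"
  using g_walk[of u v] by (auto simp: walk_betw_Suc walk_betw_0)
lemma g_down: "u \<in> V \<Longrightarrow> x \<in> V \<Longrightarrow> g u x = Suc s \<Longrightarrow> \<exists>y\<in>V. E y x \<and> g u y = s"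
proof -
  assume a: "u \<in> V" "x \<in> V" "g u x = Suc s"
  then obtain y where y: "walk_betw V E u y s" "E y x" using g_walk[of u x] by (auto simp: walk_betw_Suc)
  have "g u y \<le> s" using g_le y by auto
  moreover have "g u x \<le> g u y + 1" using g_adj[of u y x] a y by auto
  ultimately show ?thesis using y a EV by force
qed

end

context drg begin

lemma dr_cab: "v \<in> V \<Longrightarrow> w \<in> V \<Longrightarrow>
        card {x \<in> V. E w x \<and> g v x + 1 = g v w} = c (g v w) \<and>
        card {x \<in> V. E w x \<and> g v x = g v w} = a (g v w) \<and>
        card {x \<in> V. E w x \<and> g v x = g v w + 1} = b (g v w)"
  using dr unfolding distance_regular_def by blast

lemma nbr_count: assumes "v \<in> V" "x \<in> V"
  shows "card {y\<in>V. E x y \<and> g v y = t} = (if g v x = t+1 then c (t+1) else 0) + (if g v x = t then a t else 0)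
     + (if g v x + 1 = t then b (g v x) else 0)"
proof -
  note cab = dr_cab[OF assms]
  have adj: "E x y \<Longrightarrow> g v y \<le> g v x + 1 \<and> g v x \<le> g v y + 1" for y
    using g_adj[OF assms(1), of x y] g_adj[OF assms(1), of y x] Esym by blast
  consider "g v x = t+1" | "g v x = t" | "g v x + 1 = t" | "g v x \<noteq> t+1 \<and> g v x \<noteq> t \<and> g v x + 1 \<noteq> t" by blast
  then show ?thesis
  proof cases
    case 1
    have "{y\<in>V. E x y \<and> g v y = t} = {y \<in> V. E x y \<and> g v y + 1 = g v x}" using 1 by auto
    then show ?thesis using cab 1 by simp
  next
    case 2
    have "{y\<in>V. E x y \<and> g v y = t} = {y \<in> V. E x y \<and> g v y = g v x}" using 2 by auto
    then show ?thesis using cab 2 by simp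
  next
    case 3
    have "{y\<in>V. E x y \<and> g v y = t} = {y \<in> V. E x y \<and> g v y = g v x + 1}" using 3 by auto
    then show ?thesis using cab 3 by simp
  next
    case 4
    have e: "{y\<in>V. E x y \<and> g v y = t} = {}" using 4 adj by fastforce
    show ?thesis unfolding e using 4 by simp
  qed
qed

lemma sum_level: "finite A \<Longrightarrow> (\<Sum>y\<in>A. if P y then (k::nat) else 0) = k * card {y\<in>A. P y}"
  by (simp add: sum.inter_filter[symmetric])

definition P where "P u v s t = card {x\<in>V. g u x = s \<and> g v x = t}"

lemma P_swap: "P v u t s = P u v s t"
  unfolding P_def by (rule arg_cong[where f=card]) auto

lemma side: assumes "u \<in> V" "v \<in> V"
  shows "(\<Sum>x\<in>{x\<in>V. g u x = s}. card {y\<in>V. E x y \<and> g v y = t}) =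
     c (t+1) * P u v s (t+1) + a t * P u v s t + (if t = 0 then 0 else b (t-1) * P u v s (t-1))"
proof -
  let ?A = "{x\<in>V. g u x = s}"
  have fA: "finite ?A" using finV by simp
  have "(\<Sum>x\<in>?A. card {y\<in>V. E x y \<and> g v y = t}) =
     (\<Sum>x\<in>?A. (if g v x = t+1 then c (t+1) else 0) + (if g v x = t then a t else 0)
     + (if g v x + 1 = t then b (g v x) else 0))"
    using nbr_count[OF assms(2)] by (intro sum.cong) auto
  also have "\<dots> = (\<Sum>x\<in>?A. (if g v x = t+1 then c (t+1) else 0)) + (\<Sum>x\<in>?A. (if g v x = t then a t else 0))
     + (\<Sum>x\<in>?A. (if g v x + 1 = t then b (g v x) else 0))"
    by (simp add: sum.distrib)
  also have "(\<Sum>x\<in>?A. (if g v x = t+1 then c (t+1) else 0)) = c (t+1) * P u v s (t+1)"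
    unfolding sum_level[OF fA] P_def by (rule arg_cong[where f="\<lambda>X. c (t+1) * card X"]) auto
  also have "(\<Sum>x\<in>?A. (if g v x = t then a t else 0)) = a t * P u v s t"
    unfolding sum_level[OF fA] P_def by (rule arg_cong[where f="\<lambda>X. a t * card X"]) auto
  also have "(\<Sum>x\<in>?A. (if g v x + 1 = t then b (g v x) else 0)) = (if t = 0 then 0 else b (t-1) * P u v s (t-1))"
  proof (cases t)
    case 0 then show ?thesis by simp
  next
    case (Suc t')
    have "(\<Sum>x\<in>?A. (if g v x + 1 = t then b (g v x) else 0)) = (\<Sum>x\<in>?A. (if g v x = t' then b t' else 0))"
      using Suc by (intro sum.cong) auto
    also have "\<dots> = b t' * P u v s t'"
      unfolding sum_level[OF fA] P_def by (rule arg_cong[where f="\<lambda>X. b t' * card X"]) auto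
    finally show ?thesis using Suc by simp
  qed
  finally show ?thesis .
qed

lemma card_ind: "finite A \<Longrightarrow> card {y\<in>A. Q y} = (\<Sum>y\<in>A. if Q y then 1 else 0)"
  using sum_level[of A Q 1] by simp

lemma double_count:
  "(\<Sum>x\<in>{x\<in>V. R x}. card {y\<in>V. E x y \<and> Q y}) = (\<Sum>y\<in>{y\<in>V. Q y}. card {x\<in>V. E y x \<and> R x})"
proof -
  have "(\<Sum>x\<in>{x\<in>V. R x}. card {y\<in>V. E x y \<and> Q y}) = (\<Sum>x\<in>V. if R x then card {y\<in>V. E x y \<and> Q y} else 0)"
    using finV by (simp add: sum.inter_filter)
  also have "\<dots> = (\<Sum>x\<in>V. \<Sum>y\<in>V. if R x \<and> E x y \<and> Q y then 1 else 0)"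
    using finV by (intro sum.cong) (auto simp: card_ind)
  also have "\<dots> = (\<Sum>y\<in>V. \<Sum>x\<in>V. if R x \<and> E x y \<and> Q y then 1 else 0)"
    by (rule sum.swap)
  also have "\<dots> = (\<Sum>y\<in>V. if Q y then card {x\<in>V. E y x \<and> R x} else 0)"
    using finV by (intro sum.cong) (auto simp: card_ind Esym intro!: sum.cong)
  also have "\<dots> = (\<Sum>y\<in>{y\<in>V. Q y}. card {x\<in>V. E y x \<and> R x})"
    using finV by (simp add: sum.inter_filter)
  finally show ?thesis .
qed

lemma recur: assumes "u \<in> V" "v \<in> V"
  shows "c (s+1) * P u v (s+1) t + a s * P u v s t + (if s = 0 then 0 else b (s-1) * P u v (s-1) t) =
     c (t+1) * P u v s (t+1) + a t * P u v s t + (if t = 0 then 0 else b (t-1) * P u v s (t-1))"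
proof -
  have "c (t+1) * P u v s (t+1) + a t * P u v s t + (if t = 0 then 0 else b (t-1) * P u v s (t-1)) =
    (\<Sum>x\<in>{x\<in>V. g u x = s}. card {y\<in>V. E x y \<and> g v y = t})" using side[OF assms] by simp
  also have "\<dots> = (\<Sum>y\<in>{y\<in>V. g v y = t}. card {x\<in>V. E y x \<and> g u x = s})" by (rule double_count)
  also have "\<dots> = c (s+1) * P v u t (s+1) + a s * P v u t s + (if s = 0 then 0 else b (s-1) * P v u t (s-1))"
    using side[OF assms(2,1)] by simp
  finally show ?thesis by (simp add: P_swap)
qed

lemma c_pos: assumes "u \<in> V" "x \<in> V" "g u x = Suc s" shows "c (Suc s) > 0"
proof -
  obtain y where y: "y \<in> V" "E y x" "g u y = s" using g_down[OF assms] by blast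
  have "y \<in> {y\<in>V. E x y \<and> g u y + 1 = g u x}" using y assms Esym by auto
  moreover have "finite {y\<in>V. E x y \<and> g u y + 1 = g u x}" using finV by simp
  ultimately have "card {y\<in>V. E x y \<and> g u y + 1 = g u x} > 0"
    by (metis card_0_eq empty_iff gr0I)
  then show ?thesis using dr_cab[OF assms(1,2)] assms(3) by simp
qed

lemma P0: assumes "u \<in> V" "v \<in> V" shows "P u v 0 t = (if g v u = t then 1 else 0)"
proof -
  have z: "x \<in> V \<Longrightarrow> g u x = 0 \<Longrightarrow> x = u" for x using g_zero[OF assms(1), of x] by simp
  have "{x\<in>V. g u x = 0 \<and> g v x = t} = (if g v u = t then {u} else {})"
  proof (cases "g v u = t")
    case True
    then show ?thesis using z g_refl[OF assms(1)] assms(1) by auto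
  next
    case False
    then show ?thesis using z by auto
  qed
  then show ?thesis unfolding P_def by simp
qed

lemma P_const: assumes "u \<in> V" "v \<in> V" "u' \<in> V" "v' \<in> V" "g u v = g u' v'"
  shows "P u v s t = P u' v' s t"
proof (induction s arbitrary: t rule: less_induct)
  case (less s)
  show ?case
  proof (cases s)
    case 0
    then show ?thesis using P0 assms g_sym by simp
  next
    case (Suc s')
    have IH1: "P u v s' t' = P u' v' s' t'" for t' using less Suc by simp
    have IH2: "s' \<noteq> 0 \<Longrightarrow> P u v (s'-1) t' = P u' v' (s'-1) t'" for t' using less Suc by simp
    define X where "X = a s' * P u' v' s' t + (if s' = 0 then 0 else b (s'-1) * P u' v' (s'-1) t)"
    define R where "R = c (t+1) * P u' v' s' (t+1) + a t * P u' v' s' t + (if t = 0 then 0 else b (t-1) * P u' v' s' (t-1))"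
    have X1: "a s' * P u v s' t + (if s' = 0 then 0 else b (s'-1) * P u v (s'-1) t) = X"
      unfolding X_def using IH1 IH2 by (cases "s' = 0") simp_all
    have R1: "c (t+1) * P u v s' (t+1) + a t * P u v s' t + (if t = 0 then 0 else b (t-1) * P u v s' (t-1)) = R"
      unfolding R_def by (simp only: IH1)
    have e1: "c (s'+1) * P u v (s'+1) t + X = R"
      using recur[OF assms(1,2), of s' t] X1 R1 by simp
    have e2: "c (s'+1) * P u' v' (s'+1) t + X = R"
      using recur[OF assms(3,4), of s' t] unfolding X_def R_def by simp
    have "c (s'+1) * P u v (s'+1) t = c (s'+1) * P u' v' (s'+1) t"
      using e1 e2 by linarith
    then have eq: "c (Suc s') * P u v (Suc s') t = c (Suc s') * P u' v' (Suc s') t" by simp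
    show ?thesis
    proof (cases "c (Suc s') = 0")
      case False then show ?thesis using eq Suc by simp
    next
      case True
      have e1: "{x\<in>V. g u x = Suc s' \<and> g v x = t} = {}"
      proof -
        { fix x assume "x \<in> V" "g u x = Suc s'"
          then have "c (Suc s') > 0" by (rule c_pos[OF assms(1)]) }
        then show ?thesis using True by auto
      qed
      have e2: "{x\<in>V. g u' x = Suc s' \<and> g v' x = t} = {}"
      proof -
        { fix x assume "x \<in> V" "g u' x = Suc s'"
          then have "c (Suc s') > 0" by (rule c_pos[OF assms(3)]) }
        then show ?thesis using True by auto
      qed
      show ?thesis using Suc unfolding P_def by (simp only: e1 e2)
    qed
  qed
qed

end

context drg begin

abbreviation dm where "dm \<equiv> diameter V E"

lemma DS_fin: "finite {g u v | u v. u \<in> V \<and> v \<in> V}"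
proof -
  have "{g u v | u v. u \<in> V \<and> v \<in> V} = (\<lambda>(u,v). g u v) ` (V \<times> V)" by auto
  then show ?thesis using finV by simp
qed

lemma g_le_dm: "u \<in> V \<Longrightarrow> v \<in> V \<Longrightarrow> g u v \<le> dm"
  unfolding diameter_def by (rule Max_ge[OF DS_fin]) blast

lemma layers: assumes "u \<in> V"
  shows "card {x\<in>V. Q x} = (\<Sum>s\<le>dm. card {x\<in>V. g u x = s \<and> Q x})"
proof -
  have "card {x\<in>V. Q x} = (\<Sum>x\<in>V. if Q x then 1 else 0)" using card_ind[OF finV] .
  also have "\<dots> = (\<Sum>x\<in>V. \<Sum>s\<le>dm. if s = g u x then (if Q x then 1 else 0) else 0)"
  proof (rule sum.cong)
    fix x assume "x \<in> V"
    then have "g u x \<in> {..dm}" using g_le_dm[OF assms] by simp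
    then show "(if Q x then 1 else 0) = (\<Sum>s\<le>dm. if s = g u x then (if Q x then 1 else 0) else (0::nat))"
      by simp
  qed simp
  also have "\<dots> = (\<Sum>s\<le>dm. \<Sum>x\<in>V. if s = g u x then (if Q x then 1 else 0) else 0)"
    by (rule sum.swap)
  also have "\<dots> = (\<Sum>s\<le>dm. card {x\<in>V. g u x = s \<and> Q x})"
  proof (rule sum.cong)
    fix s
    have "card {x\<in>V. g u x = s \<and> Q x} = (\<Sum>x\<in>V. if g u x = s \<and> Q x then 1 else 0)"
      using card_ind[OF finV] .
    also have "\<dots> = (\<Sum>x\<in>V. if s = g u x then (if Q x then 1 else 0) else 0)"
      by (intro sum.cong) auto
    finally show "(\<Sum>x\<in>V. if s = g u x then (if Q x then 1 else 0) else 0) = card {x\<in>V. g u x = s \<and> Q x}" by simp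
  qed simp
  finally show ?thesis .
qed

definition DD where "DD u v = card {x\<in>V. g u x \<noteq> g v x}"

lemma DD_dn: "u \<in> V \<Longrightarrow> v \<in> V \<Longrightarrow> distinguishing_number V E u v = DD u v"
  unfolding distinguishing_number_def DD_def
  by (rule arg_cong[where f=card]) (auto simp: g_sym)

lemma DD_alt: assumes "u \<in> V" "v \<in> V" shows "DD u v + (\<Sum>s\<le>dm. P u v s s) = card V"
proof -
  have "card {x\<in>V. g u x = g v x} = (\<Sum>s\<le>dm. card {x\<in>V. g u x = s \<and> g u x = g v x})"
    using layers[OF assms(1)] .
  also have "\<dots> = (\<Sum>s\<le>dm. P u v s s)" unfolding P_def
    by (intro sum.cong refl arg_cong[where f=card]) auto
  finally have 1: "card {x\<in>V. g u x = g v x} = (\<Sum>s\<le>dm. P u v s s)" .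
  have "V = {x\<in>V. g u x \<noteq> g v x} \<union> {x\<in>V. g u x = g v x}" by auto
  then have "card V = card ({x\<in>V. g u x \<noteq> g v x} \<union> {x\<in>V. g u x = g v x})" by simp
  also have "\<dots> = DD u v + card {x\<in>V. g u x = g v x}" unfolding DD_def
    by (rule card_Un_disjoint) (use finV in auto)
  finally show ?thesis using 1 by simp
qed

lemma DD_const: assumes "u \<in> V" "v \<in> V" "u' \<in> V" "v' \<in> V" "g u v = g u' v'"
  shows "DD u v = DD u' v'"
proof -
  have "(\<Sum>s\<le>dm. P u v s s) = (\<Sum>s\<le>dm. P u' v' s s)"
    using P_const[OF assms] by simp
  then show ?thesis using DD_alt[OF assms(1,2)] DD_alt[OF assms(3,4)] by linarith
qed

lemma DD_tri: assumes "u \<in> V" "v \<in> V" "w \<in> V" shows "DD u w \<le> DD u v + DD v w"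
proof -
  have "{x\<in>V. g u x \<noteq> g w x} \<subseteq> {x\<in>V. g u x \<noteq> g v x} \<union> {x\<in>V. g v x \<noteq> g w x}" by auto
  then have "DD u w \<le> card ({x\<in>V. g u x \<noteq> g v x} \<union> {x\<in>V. g v x \<noteq> g w x})"
    unfolding DD_def by (intro card_mono) (use finV in auto)
  also have "\<dots> \<le> DD u v + DD v w" unfolding DD_def by (rule card_Un_le)
  finally show ?thesis .
qed

end

context drg begin

lemma Pdiag: "u \<in> V \<Longrightarrow> P u u s t = (if s = t then P u u s s else 0)"
proof (cases "s = t")
  case False
  have e: "{x\<in>V. g u x = s \<and> g u x = t} = {}" using False by auto
  show ?thesis unfolding P_def e using False by simp
qed simp

lemma Padj: assumes "u \<in> V" "v \<in> V" "g u v = 1" and "t > s + 1 \<or> s > t + 1"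
  shows "P u v s t = 0"
proof -
  have "{x\<in>V. g u x = s \<and> g v x = t} = {}"
  proof (rule equals0I)
    fix x assume x: "x \<in> {x\<in>V. g u x = s \<and> g v x = t}"
    have "g v x \<le> g v u + g u x" using g_tri assms x by blast
    moreover have "g u x \<le> g u v + g v x" using g_tri assms x by blast
    moreover have "g v u = 1" using assms g_sym by simp
    ultimately show False using x assms(3,4) by auto
  qed
  then show ?thesis unfolding P_def by (simp only: card.empty)
qed

lemma k_rec: assumes "u \<in> V" shows "c (s+1) * P u u (s+1) (s+1) = b s * P u u s s"
proof -
  have "P u u s (s+1) = 0" "P u u s (s+2) = 0" "s \<noteq> 0 \<Longrightarrow> P u u (s-1) (s+1) = 0"
    using Pdiag[OF assms, of s "s+1"] Pdiag[OF assms, of s "s+2"] Pdiag[OF assms, of "s-1" "s+1"] by auto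
  then show ?thesis using recur[OF assms assms, of s "s+1"] by (cases "s = 0") auto
qed

lemma X_rec: assumes "u \<in> V" "v \<in> V" "g u v = 1"
  shows "c (s+1) * P u v (s+1) (s+2) = b (s+1) * P u v s (s+1)"
proof -
  have z: "P u v s (s+2) = 0" "P u v s (s+3) = 0" "s \<noteq> 0 \<Longrightarrow> P u v (s-1) (s+2) = 0"
    using Padj[OF assms] by auto
  have "c (s+1) * P u v (s+1) (s+2) + a s * P u v s (s+2) + (if s = 0 then 0 else b (s-1) * P u v (s-1) (s+2)) =
     c (s+2+1) * P u v s (s+2+1) + a (s+2) * P u v s (s+2) + (if s+2 = 0 then 0 else b (s+2-1) * P u v s (s+2-1))"
    using recur[OF assms(1,2), of s "s+2"] by simp
  then show ?thesis using z by (cases "s = 0") (auto simp: numeral_eq_Suc)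
qed

lemma X_formula: assumes "u \<in> V" "v \<in> V" "g u v = 1"
  shows "b 0 * P u v s (s+1) = P u u s s * b s"
proof (induction s)
  case 0
  have "P u v 0 1 = 1" using P0[OF assms(1,2)] assms g_sym by simp
  moreover have "P u u 0 0 = 1" using P0[OF assms(1,1)] g_refl[OF assms(1)] by simp
  ultimately show ?case by simp
next
  case (Suc s)
  show ?case
  proof (cases "c (s+1) = 0")
    case True
    have e1: "{x\<in>V. g u x = Suc s \<and> g v x = Suc s + 1} = {}" and e2: "{x\<in>V. g u x = Suc s \<and> g u x = Suc s} = {}"
    proof -
      { fix x assume "x \<in> V" "g u x = Suc s"
        then have "c (Suc s) > 0" by (rule c_pos[OF assms(1)]) }
      then show "{x\<in>V. g u x = Suc s \<and> g v x = Suc s + 1} = {}" "{x\<in>V. g u x = Suc s \<and> g u x = Suc s} = {}"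
        using True by auto
    qed
    show ?thesis unfolding P_def by (simp only: e1 e2 card.empty mult_0_right mult_0)
  next
    case False
    have "c (s+1) * (b 0 * P u v (s+1) (s+2)) = b 0 * (b (s+1) * P u v s (s+1))"
      using X_rec[OF assms, of s] by (simp add: ac_simps)
    also have "\<dots> = b (s+1) * (P u u s s * b s)" using Suc.IH by (simp add: ac_simps)
    also have "\<dots> = c (s+1) * (P u u (s+1) (s+1) * b (s+1))" using k_rec[OF assms(1), of s] by (simp add: ac_simps)
    finally have "c (s+1) * (b 0 * P u v (s+1) (s+2)) = c (s+1) * (P u u (s+1) (s+1) * b (s+1))" .
    then show ?thesis using False by (simp add: numeral_eq_Suc)
  qed
qed

lemma Y_formula: assumes "u \<in> V" "v \<in> V" "g u v = 1"
  shows "b 0 * P u v (s+1) s = P u u (s+1) (s+1) * c (s+1)"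
proof -
  have "P u v (s+1) s = P v u s (s+1)" by (simp add: P_swap)
  also have "\<dots> = P u v s (s+1)" using P_const[OF assms(2,1,1,2)] assms g_sym by simp
  finally have "b 0 * P u v (s+1) s = P u u s s * b s" using X_formula[OF assms] by simp
  then show ?thesis using k_rec[OF assms(1), of s] by (simp add: ac_simps)
qed

lemma b_mono: assumes "u \<in> V" "x \<in> V" "g u x = Suc s" shows "b (Suc s) \<le> b s"
proof -
  have "g x u = Suc s" using assms g_sym by simp
  then obtain u' where u': "u' \<in> V" "E u' u" "g x u' = s" using g_down[OF assms(2,1)] by blast
  have gu': "g u' x = s" using u' assms g_sym by simp
  have "{y\<in>V. E x y \<and> g u y = g u x + 1} \<subseteq> {y\<in>V. E x y \<and> g u' y = g u' x + 1}"
  proof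
    fix y assume y: "y \<in> {y\<in>V. E x y \<and> g u y = g u x + 1}"
    have "g u y \<le> g u u' + g u' y" using g_tri assms u' y by blast
    moreover have "g u u' = 1" using g_E1[OF Esym[OF u'(2)]] .
    moreover have "g u' y \<le> g u' x + 1" using g_adj[OF u'(1), of x y] y by blast
    ultimately show "y \<in> {y\<in>V. E x y \<and> g u' y = g u' x + 1}" using y assms(3) gu' by auto
  qed
  then have "card {y\<in>V. E x y \<and> g u y = g u x + 1} \<le> card {y\<in>V. E x y \<and> g u' y = g u' x + 1}"
    by (intro card_mono) (use finV in auto)
  then show ?thesis using dr_cab[OF assms(1,2)] dr_cab[OF u'(1) assms(2)] assms(3) gu' by simp
qed

lemma c_mono: assumes "u \<in> V" "x \<in> V" "g u x = Suc s" shows "c s \<le> c (Suc s)"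
proof -
  have "g x u = Suc s" using assms g_sym by simp
  then obtain u' where u': "u' \<in> V" "E u' u" "g x u' = s" using g_down[OF assms(2,1)] by blast
  have gu': "g u' x = s" using u' assms g_sym by simp
  have "{y\<in>V. E x y \<and> g u' y + 1 = g u' x} \<subseteq> {y\<in>V. E x y \<and> g u y + 1 = g u x}"
  proof
    fix y assume y: "y \<in> {y\<in>V. E x y \<and> g u' y + 1 = g u' x}"
    have "g u y \<le> g u u' + g u' y" using g_tri assms u' y by blast
    moreover have "g u u' = 1" using g_E1[OF Esym[OF u'(2)]] .
    moreover have "g u x \<le> g u y + 1" using g_adj[OF assms(1), of y x] y Esym by blast
    ultimately show "y \<in> {y\<in>V. E x y \<and> g u y + 1 = g u x}" using y assms(3) gu' by auto
  qed
  then have "card {y\<in>V. E x y \<and> g u' y + 1 = g u' x} \<le> card {y\<in>V. E x y \<and> g u y + 1 = g u x}"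
    by (intro card_mono) (use finV in auto)
  then show ?thesis using dr_cab[OF assms(1,2)] dr_cab[OF u'(1) assms(2)] assms(3) gu' by simp
qed

lemma g_down_any: assumes "u \<in> V" "x \<in> V" "g u x = m" "l \<le> m" shows "\<exists>y\<in>V. g u y = l"
  using assms(2,3,4)
proof (induction m arbitrary: x)
  case 0 then show ?case by auto
next
  case (Suc m)
  show ?case
  proof (cases "l = Suc m")
    case True then show ?thesis using Suc.prems by blast
  next
    case False
    obtain y where "y \<in> V" "g u y = m" using g_down[OF assms(1) Suc.prems(1,2)] by blast
    then show ?thesis using Suc.IH False Suc.prems(3) by simp
  qed
qed

end

context drg begin

lemma Vne: "V \<noteq> {}" using sg unfolding simple_graph_def by auto

lemma max_pair: "\<exists>u\<in>V. \<exists>x\<in>V. g u x = dm"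
proof -
  have "{g u v | u v. u \<in> V \<and> v \<in> V} \<noteq> {}" using Vne by auto
  then have "dm \<in> {g u v | u v. u \<in> V \<and> v \<in> V}" unfolding diameter_def by (rule Max_in[OF DS_fin])
  then obtain u x where h: "dm = g u x" "u \<in> V" "x \<in> V" by blast
  show ?thesis using h by (intro bexI[of _ u] bexI[of _ x]) auto
qed

lemma dist_exists: "m \<le> dm \<Longrightarrow> \<exists>u\<in>V. \<exists>x\<in>V. g u x = m"
  using max_pair g_down_any by metis

lemma b_anti: "s \<le> s' \<Longrightarrow> s' \<le> dm \<Longrightarrow> b s' \<le> b s"
proof (induction s' rule: dec_induct)
  case base then show ?case by simp
next
  case (step m)
  obtain u x where "u \<in> V" "x \<in> V" "g u x = Suc m" using dist_exists[OF step.prems] by blast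
  then have "b (Suc m) \<le> b m" by (rule b_mono)
  then show ?case using step by simp
qed

lemma c_mon: "s \<le> s' \<Longrightarrow> s' \<le> dm \<Longrightarrow> c s \<le> c s'"
proof (induction s' rule: dec_induct)
  case base then show ?case by simp
next
  case (step m)
  obtain u x where "u \<in> V" "x \<in> V" "g u x = Suc m" using dist_exists[OF step.prems] by blast
  then have "c m \<le> c (Suc m)" by (rule c_mono)
  then show ?case using step by simp
qed

lemma adj_bound:
  fixes \<alpha> :: real
  assumes "u \<in> V" "v \<in> V" "g u v = 1" "j < dm"
    and bj: "real (b j) \<ge> \<alpha> * real (b 0)"
    and cj: "real (c (j + 1)) \<ge> \<alpha> * real (b 0)"
  shows "\<alpha> * real (b 0) * real (card V) \<le> real (b 0) * real (DD u v)"
proof -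
  have DDs: "DD u v = (\<Sum>s\<le>dm. card {x\<in>V. g u x = s \<and> g u x \<noteq> g v x})"
    unfolding DD_def by (rule layers[OF assms(1)])
  have cV: "card V = (\<Sum>s\<le>dm. P u u s s)"
  proof -
    have "card V = card {x\<in>V. True}" by simp
    also have "\<dots> = (\<Sum>s\<le>dm. card {x\<in>V. g u x = s \<and> True})" by (rule layers[OF assms(1)])
    also have "\<dots> = (\<Sum>s\<le>dm. P u u s s)" unfolding P_def by simp
    finally show ?thesis .
  qed
  have trm: "\<alpha> * real (b 0) * real (P u u s s) \<le> real (b 0) * real (card {x\<in>V. g u x = s \<and> g u x \<noteq> g v x})"
    if s: "s \<le> dm" for s
  proof (cases "s \<le> j")
    case True
    have "P u v s (s+1) \<le> card {x\<in>V. g u x = s \<and> g u x \<noteq> g v x}"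
      unfolding P_def by (intro card_mono) (use finV in auto)
    then have "real (b 0) * real (P u v s (s+1)) \<le> real (b 0) * real (card {x\<in>V. g u x = s \<and> g u x \<noteq> g v x})"
      by (simp add: mult_left_mono)
    moreover have "real (b 0) * real (P u v s (s+1)) = real (b s) * real (P u u s s)"
      using X_formula[OF assms(1-3), of s] by (metis of_nat_mult mult.commute)
    moreover have "real (b j) \<le> real (b s)" using b_anti[OF True] assms(4) by simp
    then have "\<alpha> * real (b 0) \<le> real (b s)" using bj by linarith
    then have "\<alpha> * real (b 0) * real (P u u s s) \<le> real (b s) * real (P u u s s)"
      by (rule mult_right_mono) auto
    ultimately show ?thesis by linarith
  next
    case False
    then obtain s' where s': "s = s' + 1" by (metis Suc_eq_plus1 not0_implies_Suc not_less_eq_eq le0)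
    have "P u v (s'+1) s' \<le> card {x\<in>V. g u x = s \<and> g u x \<noteq> g v x}"
      unfolding P_def using s' by (intro card_mono) (use finV in auto)
    then have "real (b 0) * real (P u v (s'+1) s') \<le> real (b 0) * real (card {x\<in>V. g u x = s \<and> g u x \<noteq> g v x})"
      by (simp add: mult_left_mono)
    moreover have "real (b 0) * real (P u v (s'+1) s') = real (c s) * real (P u u s s)"
      using Y_formula[OF assms(1-3), of s'] s' by (metis of_nat_mult mult.commute)
    moreover have "real (c (j+1)) \<le> real (c s)" using c_mon[of "j+1" s] False s by simp
    then have "\<alpha> * real (b 0) \<le> real (c s)" using cj by linarith
    then have "\<alpha> * real (b 0) * real (P u u s s) \<le> real (c s) * real (P u u s s)"
      by (rule mult_right_mono) auto
    ultimately show ?thesis by linarith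
  qed
  have "\<alpha> * real (b 0) * real (card V) = (\<Sum>s\<le>dm. \<alpha> * real (b 0) * real (P u u s s))"
    unfolding cV by (simp add: sum_distrib_left)
  also have "\<dots> \<le> (\<Sum>s\<le>dm. real (b 0) * real (card {x\<in>V. g u x = s \<and> g u x \<noteq> g v x}))"
    by (rule sum_mono) (use trm in auto)
  also have "\<dots> = real (b 0) * real (DD u v)"
    unfolding DDs by (simp add: sum_distrib_left)
  finally show ?thesis .
qed

end

primrec reach :: "'a set \<Rightarrow> ('a \<Rightarrow> 'a \<Rightarrow> bool) \<Rightarrow> 'a \<Rightarrow> nat \<Rightarrow> 'a set" where
  "reach V R u 0 = {u}"
| "reach V R u (Suc t) = reach V R u t \<union> {w\<in>V. \<exists>y\<in>reach V R u t. R y w}"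

lemma reach_mono: "t \<le> t' \<Longrightarrow> reach V R u t \<subseteq> reach V R u t'"
  by (induction t' rule: dec_induct) auto

lemma reach_walk: "walk_betw V R u w m \<Longrightarrow> w \<in> reach V R u m"
proof (induction m arbitrary: w)
  case 0 then show ?case by (simp add: walk_betw_0)
next
  case (Suc m) then show ?case by (auto simp: walk_betw_Suc)
qed

lemma reach_stab: "reach V R u (Suc t) = reach V R u t \<Longrightarrow> reach V R u (t + m) = reach V R u t"
proof (induction m)
  case 0 then show ?case by simp
next
  case (Suc m)
  have "reach V R u (t + Suc m) = reach V R u (Suc (t + m))" by simp
  also have "\<dots> = reach V R u (Suc t)" using Suc by (simp only: reach.simps)
  finally show ?case using Suc.prems by simp
qed

context drg begin

lemma reach_V: "u \<in> V \<Longrightarrow> reach V R u t \<subseteq> V"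
  by (induction t) auto

lemma reach_DD: assumes "u \<in> V" "u0 \<in> V" "v0 \<in> V" "g u0 v0 = i"
  shows "w \<in> reach V (distance_graph V E i) u t \<Longrightarrow> DD u w \<le> t * DD u0 v0"
proof (induction t arbitrary: w)
  case 0 then show ?case by (simp add: DD_def)
next
  case (Suc t)
  show ?case
  proof (cases "w \<in> reach V (distance_graph V E i) u t")
    case True
    have "t * DD u0 v0 \<le> Suc t * DD u0 v0" by simp
    then show ?thesis using Suc.IH[OF True] by linarith
  next
    case False
    then obtain y where y: "y \<in> reach V (distance_graph V E i) u t" "distance_graph V E i y w"
      using Suc.prems by auto
    have yV: "y \<in> V" "w \<in> V" "g y w = i" using y unfolding distance_graph_def by auto
    have "DD u w \<le> DD u y + DD y w" using DD_tri assms(1) yV by blast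
    also have "DD y w = DD u0 v0" using DD_const[of y w u0 v0] yV assms by simp
    finally show ?thesis using Suc.IH[OF y(1)] by simp
  qed
qed

lemma reach_class: assumes "u \<in> V"
  shows "w \<in> reach V (distance_graph V E i) u t \<Longrightarrow> w' \<in> V \<Longrightarrow> g u w' = g u w
     \<Longrightarrow> w' \<in> reach V (distance_graph V E i) u t"
proof (induction t arbitrary: w w')
  case 0
  then have "w = u" by simp
  then have "w' = u" using 0 g_zero[OF assms] g_refl[OF assms] by simp
  then show ?case by simp
next
  case (Suc t)
  show ?case
  proof (cases "w \<in> reach V (distance_graph V E i) u t")
    case True then show ?thesis using Suc.IH Suc.prems by auto
  next
    case False
    then obtain y where y: "y \<in> reach V (distance_graph V E i) u t" "distance_graph V E i y w"
      using Suc.prems by auto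
    have yV: "y \<in> V" "w \<in> V" "g y w = i" using y unfolding distance_graph_def by auto
    have "y \<in> {x\<in>V. g u x = g u y \<and> g w x = i}" using yV g_sym by auto
    then have ne: "{x\<in>V. g u x = g u y \<and> g w x = i} \<noteq> {}" by blast
    have "finite {x\<in>V. g u x = g u y \<and> g w x = i}" using finV by simp
    then have "P u w (g u y) i > 0" unfolding P_def using ne by (simp add: card_gt_0_iff)
    moreover have "P u w' (g u y) i = P u w (g u y) i"
      using P_const[of u w' u w] assms Suc.prems yV by simp
    ultimately have "card {x\<in>V. g u x = g u y \<and> g w' x = i} \<noteq> 0" unfolding P_def by simp
    then have "{x\<in>V. g u x = g u y \<and> g w' x = i} \<noteq> {}" by (metis card.empty)
    then obtain y' where y': "y' \<in> V" "g u y' = g u y" "g w' y' = i" by blast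
    have "y' \<in> reach V (distance_graph V E i) u t" using Suc.IH[OF y(1) y'(1)] y' by simp
    moreover have "distance_graph V E i y' w'" unfolding distance_graph_def
      using y' Suc.prems g_sym by auto
    ultimately show ?thesis using Suc.prems by auto
  qed
qed

lemma closure:
  assumes prim: "primitive V E" and uv: "u \<in> V" "v \<in> V" "g u v = i" "1 \<le> i"
  shows "\<exists>z\<in>V. g u z = 1 \<and> DD u z \<le> dm * DD u v"
proof -
  let ?R = "reach V (distance_graph V E i) u"
  have idm: "i \<le> dm" using g_le_dm uv by auto
  have con: "\<forall>x\<in>V. \<forall>y\<in>V. \<exists>n. walk_betw V (distance_graph V E i) x y n"
  proof -
    have "connected_rel V (distance_graph V E i)" using prim idm uv(4) unfolding primitive_def by simp
    then show ?thesis unfolding connected_rel_def .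
  qed
  obtain z0 where z0: "z0 \<in> V" "g u z0 = 1" using g_down_any[OF uv(1,2,3)] uv(4) by blast
  have RV: "?R t \<subseteq> V" for t using reach_V[OF uv(1)] .
  have fS: "finite ((g u) ` ?R t)" for t using finite_subset[OF RV finV] by simp
  have Sdm: "(g u) ` ?R t \<subseteq> {..dm}" for t using RV g_le_dm[OF uv(1)] by auto
  have goal: "\<exists>z\<in>?R dm. g u z = 1"
  proof (rule ccontr)
    assume H: "\<not> (\<exists>z\<in>?R dm. g u z = 1)"
    have claim: "t \<le> dm \<Longrightarrow> card ((g u) ` ?R t) \<ge> t + 1" for t
    proof (induction t)
      case 0
      have "(g u) ` ?R 0 = {0}" using g_refl[OF uv(1)] by simp
      then show ?case by simp
    next
      case (Suc t)
      have sub: "(g u) ` ?R t \<subseteq> (g u) ` ?R (Suc t)" using reach_mono[of t "Suc t"] by auto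
      show ?case
      proof (cases "(g u) ` ?R (Suc t) = (g u) ` ?R t")
        case True
        have stab: "?R (Suc t) = ?R t"
        proof
          show "?R (Suc t) \<subseteq> ?R t"
          proof
            fix w assume w: "w \<in> ?R (Suc t)"
            then have "g u w \<in> (g u) ` ?R t" using True by blast
            then obtain w0 where w0: "w0 \<in> ?R t" "g u w0 = g u w" by auto
            have "w \<in> V" using w RV by blast
            then show "w \<in> ?R t" using reach_class[OF uv(1) w0(1) _ w0(2)[symmetric]] by simp
          qed
        qed (rule reach_mono, simp)
        obtain n where "walk_betw V (distance_graph V E i) u z0 n" using con uv(1) z0(1) by blast
        then have "z0 \<in> ?R n" by (rule reach_walk)
        then have "z0 \<in> ?R (t + n)" using reach_mono[of n "t+n" V "distance_graph V E i" u] by auto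
        then have "z0 \<in> ?R t" using reach_stab[OF stab] by simp
        then have "z0 \<in> ?R dm" using reach_mono[of t dm V "distance_graph V E i" u] Suc.prems by auto
        then show ?thesis using H z0(2) by auto
      next
        case False
        then have "(g u) ` ?R t \<subset> (g u) ` ?R (Suc t)" using sub by blast
        then have "card ((g u) ` ?R t) < card ((g u) ` ?R (Suc t))" by (rule psubset_card_mono[OF fS])
        then show ?thesis using Suc by simp
      qed
    qed
    have "card ((g u) ` ?R dm) \<ge> dm + 1" using claim by simp
    moreover have "card {..dm} = dm + 1" by simp
    moreover have "card ((g u) ` ?R dm) \<le> card {..dm}" by (rule card_mono[OF finite_atMost Sdm])
    ultimately have "card ((g u) ` ?R dm) = card {..dm}" by linarith
    then have "(g u) ` ?R dm = {..dm}" by (rule card_subset_eq[OF finite_atMost Sdm])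
    then have "1 \<in> (g u) ` ?R dm" using idm uv(4) by auto
    then show False using H by auto
  qed
  then obtain z where z: "z \<in> ?R dm" "g u z = 1" by blast
  have "DD u z \<le> dm * DD u v" using reach_DD[OF uv(1,1,2,3) z(1)] .
  then show ?thesis using z RV by blast
qed

end

theorem proposition4p8:
  fixes V :: "'a set" and E :: "'a \<Rightarrow> 'a \<Rightarrow> bool"
    and a b c :: "nat \<Rightarrow> nat" and d j :: nat and \<alpha> :: real
  assumes "distance_regular V E a b c"
    and "primitive V E"
    and "diameter V E = d" and "d \<ge> 2"
    and "\<alpha> > 0"
    and "1 \<le> j" and "j \<le> d - 1"
    and "real (b j) \<ge> \<alpha> * real (b 0)"
    and "real (c (j + 1)) \<ge> \<alpha> * real (b 0)"
  shows "real (D_min V E) \<ge> \<alpha> / real d * real (card V)"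
proof -
  interpret drg V E a b c by unfold_locales (rule assms(1))
  have dm: "dm = d" using assms(3) .
  obtain u0 x0 where u0: "u0 \<in> V" "x0 \<in> V" "g u0 x0 = d" using max_pair dm by blast
  obtain y0 where y0: "y0 \<in> V" "g u0 y0 = 1" using g_down_any[OF u0, of 1] assms(4) by auto
  have "u0 \<noteq> y0" using y0 g_refl[OF u0(1)] by auto
  have b0: "b 0 > 0"
  proof -
    have "y0 \<in> {x \<in> V. E u0 x \<and> g u0 x = g u0 u0 + 1}" using y0 g_one_E[OF u0(1) y0(1)] g_refl[OF u0(1)] by simp
    moreover have "finite {x \<in> V. E u0 x \<and> g u0 x = g u0 u0 + 1}" using finV by simp
    ultimately have "card {x \<in> V. E u0 x \<and> g u0 x = g u0 u0 + 1} > 0" by (metis card_0_eq empty_iff gr0I)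
    then show ?thesis using dr_cab[OF u0(1) u0(1)] g_refl[OF u0(1)] by simp
  qed
  let ?S = "{distinguishing_number V E u v | u v. u \<in> V \<and> v \<in> V \<and> u \<noteq> v}"
  have "?S \<subseteq> (\<lambda>(u,v). distinguishing_number V E u v) ` (V \<times> V)" by auto
  then have fS: "finite ?S" using finV by (meson finite_SigmaI finite_imageI finite_subset)
  have "?S \<noteq> {}" using u0(1) y0(1) \<open>u0 \<noteq> y0\<close> by blast
  then have "D_min V E \<in> ?S" unfolding D_min_def by (rule Min_in[OF fS])
  then obtain u1 v1 where uv1: "D_min V E = distinguishing_number V E u1 v1" "u1 \<in> V" "v1 \<in> V" "u1 \<noteq> v1"
    by blast
  have Dm: "D_min V E = DD u1 v1" using uv1 DD_dn by simp
  have i1: "1 \<le> g u1 v1" using g_zero[OF uv1(2,3)] uv1(4) by (cases "g u1 v1") auto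
  obtain z where z: "z \<in> V" "g u1 z = 1" "DD u1 z \<le> dm * DD u1 v1"
    using closure[OF assms(2) uv1(2,3) refl i1] by blast
  have "j < dm" using dm assms(4,7) by simp
  have "\<alpha> * real (b 0) * real (card V) \<le> real (b 0) * real (DD u1 z)"
    by (rule adj_bound[OF uv1(2) z(1,2) \<open>j < dm\<close> assms(8,9)])
  then have "real (b 0) * (\<alpha> * real (card V)) \<le> real (b 0) * real (DD u1 z)" by (simp add: ac_simps)
  then have "\<alpha> * real (card V) \<le> real (DD u1 z)" using b0 by (simp add: mult_le_cancel_left_pos)
  also have "\<dots> \<le> real d * real (DD u1 v1)" using z(3) dm by (metis of_nat_le_iff of_nat_mult)
  finally have "\<alpha> * real (card V) \<le> real (D_min V E) * real d" using Dm by (simp add: ac_simps)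
  moreover have "real d > 0" using assms(4) by simp
  ultimately show ?thesis by (simp add: pos_divide_le_eq)
qed

end
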